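(* Let $a,b\in\mathbb{R}$ with $0<a<b$, let $p,q>1$ with $\frac1p+\frac1q=1$, $s\in\left(0,\frac1q\right)$, and $\alpha,\lambda\in[0,1]$. Define $$C_s(\alpha,q)=(1-\alpha)\big[A_\alpha^{sq}(a,b)+a^{sq}\big],\qquad D_s(\alpha,q)=\alpha\big[A_\alpha^{sq}(a,b)+b^{sq}\big],$$ $$\varepsilon_1(\alpha,\lambda,p)=(\alpha\lambda)^{p+1}+(1-\alpha-\alpha\lambda)^{p+1},\qquad \varepsilon_2(\alpha,\lambda,p)=(\alpha\lambda)^{p+1}-(\alpha\lambda-1+\alpha)^{p+1}.$$ Then $$\left|\lambda A_\alpha(a^{s+1},b^{s+1})+(1-\lambda)A_\alpha^{s+1}(a,b)-L_{s+1}^{s+1}(a,b)\right|\leq (b-a)\left(\frac{1}{p+1}\right)^{1/p}(s+1)^{1-\frac1q}\cdot K,$$ where $K=\varepsilon_1^{1/p}(\alpha,\lambda,p)C_s^{1/q}(\alpha,q)+\varepsilon_1^{1/p}(1-\alpha,\lambda,p)D_s^{1/q}(\alpha,q)$ if $\alpha\lambda\leq 1-\alpha\leq 1-\lambda(1-\alpha)$; $K=\varepsilon_1^{1/p}(\alpha,\lambda,p)C_s^{1/q}(\alpha,q)+\varepsilon_2^{1/p}(1-\alpha,\lambda,p)D_s^{1/q}(\alpha,q)$ if $\alpha\lambda\leq 1-\lambda(1-\alpha)\leq 1-\alpha$; $K=\varepsilon_2^{1/p}(\alpha,\lambda,p)C_s^{1/q}(\alpha,q)+\varepsilon_1^{1/p}(1-\alpha,\lambda,p)D_s^{1/q}(\alpha,q)$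 if $1-\alpha\leq\alpha\lambda\leq 1-\lambda(1-\alpha)$.
   Context: For real $x,y$ and $\alpha\in[0,1]$, the weighted arithmetic mean is $A_\alpha(x,y)=\alpha x+(1-\alpha)y$, and $A_\alpha^{r}(x,y)$ denotes $(A_\alpha(x,y))^{r}$. For $x,y>0$, $x\neq y$, and $p\in\mathbb{R}\setminus\{-1,0\}$, the $p$-logarithmic mean is $L_p(x,y)=\left(\frac{y^{p+1}-x^{p+1}}{(p+1)(y-x)}\right)^{1/p}$, and $L_{s+1}^{s+1}$ denotes its $(s+1)$-th power. *)

theory Defs
  imports Complex_Main
begin

definition wam :: "real \<Rightarrow> real \<Rightarrow> real \<Rightarrow> real" where
  "wam \<alpha> x y = \<alpha> * x + (1 - \<alpha>) * y"

definition plog_mean :: "real \<Rightarrow> real \<Rightarrow> real \<Rightarrow> real" where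
  "plog_mean p x y = ((y powr (p + 1) - x powr (p + 1)) / ((p + 1) * (y - x))) powr (1 / p)"

definition Cs :: "real \<Rightarrow> real \<Rightarrow> real \<Rightarrow> real \<Rightarrow> real \<Rightarrow> real" where
  "Cs a b s \<alpha> q = (1 - \<alpha>) * (wam \<alpha> a b powr (s * q) + a powr (s * q))"

definition Ds :: "real \<Rightarrow> real \<Rightarrow> real \<Rightarrow> real \<Rightarrow> real \<Rightarrow> real" where
  "Ds a b s \<alpha> q = \<alpha> * (wam \<alpha> a b powr (s * q) + b powr (s * q))"

definition eps1 :: "real \<Rightarrow> real \<Rightarrow> real \<Rightarrow> real" where
  "eps1 \<alpha> lam p = (\<alpha> * lam) powr (p + 1) + (1 - \<alpha> - \<alpha> * lam) powr (p + 1)"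

definition eps2 :: "real \<Rightarrow> real \<Rightarrow> real \<Rightarrow> real" where
  "eps2 \<alpha> lam p = (\<alpha> * lam) powr (p + 1) - (\<alpha> * lam - 1 + \<alpha>) powr (p + 1)"

end

theory Submission
  imports Defs "HOL-Analysis.Analysis"
begin


lemma ftc:
  fixes G g :: "real \<Rightarrow> real"
  assumes "l \<le> r" "continuous_on {l..r} G"
    "\<And>x. x \<in> {l<..<r} \<Longrightarrow> (G has_real_derivative g x) (at x)"
  shows "(g has_integral (G r - G l)) {l..r}"
  using assms by (intro fundamental_theorem_of_calculus_interior)
     (auto simp: has_real_derivative_iff_has_vector_derivative)

lemma int_abs_pow_right:
  fixes l r c p :: real
  assumes "c \<le> l" "l \<le> r" "p > 0"
  shows "integral {l..r} (\<lambda>t. \<bar>t - c\<bar> powr p) = ((r-c) powr (p+1) - (l-c) powr (p+1))/(p+1)"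
proof -
  have "((\<lambda>t. \<bar>t - c\<bar> powr p) has_integral ((\<lambda>t. (t-c) powr (p+1)/(p+1)) r - (\<lambda>t. (t-c) powr (p+1)/(p+1)) l)) {l..r}"
  proof (rule ftc)
    show "continuous_on {l..r} (\<lambda>t. (t - c) powr (p + 1) / (p + 1))"
      using assms by (intro continuous_intros continuous_on_powr') auto
    fix x assume x: "x \<in> {l<..<r}"
    then have "x - c > 0" using assms by auto
    then show "((\<lambda>t. (t - c) powr (p + 1) / (p + 1)) has_real_derivative \<bar>x - c\<bar> powr p) (at x)"
      using assms by (auto intro!: derivative_eq_intros)
  qed (use assms in auto)
  then show ?thesis by (simp add: integral_unique diff_divide_distrib)
qed

lemma int_abs_pow_left:
  fixes l r c p :: real
  assumes "r \<le> c" "l \<le> r" "p > 0"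
  shows "integral {l..r} (\<lambda>t. \<bar>t - c\<bar> powr p) = ((c-l) powr (p+1) - (c-r) powr (p+1))/(p+1)"
proof -
  have "((\<lambda>t. \<bar>t - c\<bar> powr p) has_integral ((\<lambda>t. - ((c-t) powr (p+1))/(p+1)) r - (\<lambda>t. - ((c-t) powr (p+1))/(p+1)) l)) {l..r}"
  proof (rule ftc)
    show "continuous_on {l..r} (\<lambda>t. - ((c - t) powr (p + 1)) / (p + 1))"
      using assms by (intro continuous_intros continuous_on_powr') auto
    fix x assume x: "x \<in> {l<..<r}"
    then have "c - x > 0" using assms by auto
    then show "((\<lambda>t. - ((c - t) powr (p + 1)) / (p + 1)) has_real_derivative \<bar>x - c\<bar> powr p) (at x)"
      using assms by (auto intro!: derivative_eq_intros simp: abs_minus_commute)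
  qed (use assms in auto)
  then show ?thesis by (simp add: integral_unique diff_divide_distrib)
qed



lemma opt_bound:
  fixes X U V p q :: real
  assumes H: "\<And>\<mu>. \<mu> > 0 \<Longrightarrow> X \<le> \<mu> powr p * U / p + V / (q * \<mu> powr q)"
    and U: "U \<ge> 0" and V: "V \<ge> 0" and p: "p > 1" and q: "q > 1" and pq: "1/p + 1/q = 1"
  shows "X \<le> U powr (1/p) * V powr (1/q)"
proof -
  have pq2: "p * q = p + q" using pq p q by (simp add: field_simps)
  consider "U = 0" | "V = 0" | "U > 0" "V > 0" using U V by linarith
  then show ?thesis
  proof cases
    case 1
    show ?thesis
    proof (rule ccontr)
      assume "\<not> ?thesis"
      then have X: "X > 0" using 1 by simp
      show False
      proof (cases "V = 0")
        case True
        then show False using H[of 1] 1 X by simp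
      next
        case False
        define \<mu> where "\<mu> = (2*V/(q*X)) powr (1/q)"
        have pos: "2*V/(q*X) > 0" using False V X q by auto
        have mp: "\<mu> > 0" using pos False X q by (simp add: \<mu>_def)
        have "\<mu> powr q = 2*V/(q*X)" unfolding \<mu>_def using pos q False V X by (simp add: powr_powr)
        then have e1: "V / (q * \<mu> powr q) = X/2" using False V X q mp by (simp add: field_simps)
        have e2: "\<mu> powr p * U / p = 0" using 1 by simp
        have "X \<le> \<mu> powr p * U / p + V / (q * \<mu> powr q)" by (rule H[OF mp])
        also have "\<dots> = X/2" by (simp add: e1 e2)
        finally show False using X by linarith
      qed
    qed
  next
    case 2
    show ?thesis
    proof (rule ccontr)
      assume "\<not> ?thesis"
      then have X: "X > 0" using 2 by simp
      show False
      proof (cases "U = 0")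
        case True
        then show False using H[of 1] 2 X by simp
      next
        case False
        define \<mu> where "\<mu> = (p*X/(2*U)) powr (1/p)"
        have pos: "p*X/(2*U) > 0" using False U X p by auto
        have mp: "\<mu> > 0" using pos False X p by (simp add: \<mu>_def)
        have "\<mu> powr p = p*X/(2*U)" unfolding \<mu>_def using pos p False U X by (simp add: powr_powr)
        then have e1: "\<mu> powr p * U / p = X/2" using False U X p by (simp add: field_simps)
        have e2: "V / (q * \<mu> powr q) = 0" using 2 by simp
        have "X \<le> \<mu> powr p * U / p + V / (q * \<mu> powr q)" by (rule H[OF mp])
        also have "\<dots> = X/2" by (simp add: e1 e2)
        finally show False using X by linarith
      qed
    qed
  next
    case 3
    define \<mu> where "\<mu> = (V/U) powr (1/(p*q))"
    have mp: "\<mu> > 0" using 3 by (simp add: \<mu>_def)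
    have e1: "\<mu> powr p = V powr (1/q) / U powr (1/q)"
      unfolding \<mu>_def using 3 p q by (simp add: powr_powr powr_divide)
    have e2: "\<mu> powr q = V powr (1/p) / U powr (1/p)"
      unfolding \<mu>_def using 3 p q by (simp add: powr_powr powr_divide)
    have Usp: "U = U powr (1/p) * U powr (1/q)"
      using 3 pq by (simp flip: powr_add)
    have Vsp: "V = V powr (1/p) * V powr (1/q)"
      using 3 pq by (simp flip: powr_add)
    have a1: "\<mu> powr p * U / p = U powr (1/p) * V powr (1/q) / p"
      unfolding e1 using 3 by (subst (2) Usp) (simp add: field_simps)
    have a2: "V / (q * \<mu> powr q) = U powr (1/p) * V powr (1/q) / q"
      unfolding e2 using 3 by (subst (1) Vsp) (simp add: field_simps)
    have "X \<le> U powr (1/p) * V powr (1/q) / p + U powr (1/p) * V powr (1/q) / q"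
      using H[OF mp] a1 a2 by simp
    also have "\<dots> = U powr (1/p) * V powr (1/q) * (1/p + 1/q)" by (simp add: field_simps)
    finally show ?thesis using pq by simp
  qed
qed

lemma int_lin:
  fixes f g :: "real \<Rightarrow> real"
  assumes "f integrable_on S" "g integrable_on S"
  shows "integral S (\<lambda>x. A * f x + B * g x) = A * integral S f + B * integral S g"
  using assms by (simp add: integral_add integrable_on_mult_right)

lemma holder:
  fixes u v :: "real \<Rightarrow> real"
  assumes "l \<le> r" "continuous_on {l..r} u" "continuous_on {l..r} v"
    and nn: "\<And>t. t \<in> {l..r} \<Longrightarrow> u t \<ge> 0 \<and> v t \<ge> 0"
    and p: "p > 1" and q: "q > 1" and pq: "1/p + 1/q = 1"
  shows "integral {l..r} (\<lambda>t. u t * v t) \<le>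
     integral {l..r} (\<lambda>t. u t powr p) powr (1/p) * integral {l..r} (\<lambda>t. v t powr q) powr (1/q)"
proof (rule opt_bound[OF _ _ _ p q pq])
  have iu: "(\<lambda>t. u t powr p) integrable_on {l..r}"
    using assms by (intro integrable_continuous_interval continuous_on_powr' continuous_intros) auto
  have iv: "(\<lambda>t. v t powr q) integrable_on {l..r}"
    using assms by (intro integrable_continuous_interval continuous_on_powr' continuous_intros) auto
  have iuv: "(\<lambda>t. u t * v t) integrable_on {l..r}"
    using assms by (intro integrable_continuous_interval continuous_intros)
  show "integral {l..r} (\<lambda>t. u t powr p) \<ge> 0"
    by (rule integral_nonneg[OF iu]) auto
  show "integral {l..r} (\<lambda>t. v t powr q) \<ge> 0"
    by (rule integral_nonneg[OF iv]) auto
  fix \<mu> :: real assume mu: "\<mu> > 0"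
  have "integral {l..r} (\<lambda>t. u t * v t) \<le> integral {l..r} (\<lambda>t. \<mu> powr p / p * u t powr p + 1 / (q * \<mu> powr q) * v t powr q)"
  proof (rule integral_le[OF iuv])
    show "(\<lambda>t. \<mu> powr p / p * u t powr p + 1 / (q * \<mu> powr q) * v t powr q) integrable_on {l..r}"
      using iu iv by (intro integrable_add integrable_on_mult_right)
    fix t assume t: "t \<in> {l..r}"
    have "u t * v t = (\<mu> * u t) * (v t / \<mu>)" using mu by simp
    also have "\<dots> \<le> (\<mu> * u t) powr p / p + (v t / \<mu>) powr q / q"
      using nn[OF t] mu p q pq by (intro Youngs_inequality) auto
    also have "\<dots> = \<mu> powr p / p * u t powr p + 1 / (q * \<mu> powr q) * v t powr q"
      using nn[OF t] mu by (simp add: powr_mult powr_divide)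
    finally show "u t * v t \<le> \<dots>" .
  qed
  also have "\<dots> = \<mu> powr p * integral {l..r} (\<lambda>t. u t powr p) / p + integral {l..r} (\<lambda>t. v t powr q) / (q * \<mu> powr q)"
    using int_lin[OF iu iv, of "\<mu> powr p / p" "1 / (q * \<mu> powr q)"] by simp
  finally show "integral {l..r} (\<lambda>t. u t * v t) \<le> \<mu> powr p * integral {l..r} (\<lambda>t. u t powr p) / p + integral {l..r} (\<lambda>t. v t powr q) / (q * \<mu> powr q)" .
qed



lemma powr_subadd:
  fixes u v r :: real
  assumes "0 \<le> u" "0 \<le> v" "0 < r" "r \<le> 1"
  shows "(u+v) powr r \<le> u powr r + v powr r"
proof (cases "u + v = 0")
  case True then show ?thesis using assms by simp
next
  case False
  then have S: "u + v > 0" using assms by simp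
  have h1: "u/(u+v) \<le> (u/(u+v)) powr r"
    using assms S powr_mono'[of r 1 "u/(u+v)"] by simp
  have h2: "v/(u+v) \<le> (v/(u+v)) powr r"
    using assms S powr_mono'[of r 1 "v/(u+v)"] by simp
  have "1 = u/(u+v) + v/(u+v)" using S by (simp add: add_divide_distrib[symmetric])
  also have "\<dots> \<le> (u/(u+v)) powr r + (v/(u+v)) powr r" using h1 h2 by simp
  also have "\<dots> = (u powr r + v powr r) / (u+v) powr r"
    using assms S by (simp add: powr_divide add_divide_distrib)
  finally show ?thesis using S by (simp add: field_simps)
qed

lemma pointwise:
  fixes Y Z w s r :: real
  assumes "Y > 0" "Z > 0" "0 \<le> w" "w \<le> 1" "0 < s" "s \<le> r" "r \<le> 1"
  shows "((1-w)*Y + w*Z) powr r \<le> (1-w) powr s * Y powr r + w powr s * Z powr r"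
proof -
  have "((1-w)*Y + w*Z) powr r \<le> ((1-w)*Y) powr r + (w*Z) powr r"
    using assms by (intro powr_subadd) auto
  also have "\<dots> = (1-w) powr r * Y powr r + w powr r * Z powr r"
    using assms by (simp add: powr_mult)
  also have "\<dots> \<le> (1-w) powr s * Y powr r + w powr s * Z powr r"
    using assms by (intro add_mono mult_right_mono powr_mono') auto
  finally show ?thesis .
qed



lemma cont_abs_pow: "s > 0 \<Longrightarrow> continuous_on S (\<lambda>t::real. \<bar>t - c\<bar> powr s)"
  by (intro continuous_on_powr' continuous_intros) auto

lemma aux_cancel: "(K::real) \<noteq> 0 \<Longrightarrow> y / K * (K * d / e) + z / K * (K * d / e) = d * (y + z) / e"
  by (simp add: divide_simps) (simp add: algebra_simps)

lemma int_pow_bound: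
  fixes a b l r s \<rho> :: real
  assumes a: "0 < a" "a < b" and lr: "0 \<le> l" "l \<le> r" and s: "0 < s" "s \<le> \<rho>" "\<rho> \<le> 1"
  shows "integral {l..r} (\<lambda>t. (a + t*(b-a)) powr \<rho>)
     \<le> (r-l) * ((a + l*(b-a)) powr \<rho> + (a + r*(b-a)) powr \<rho>) / (s+1)"
proof (cases "l = r")
  case True then show ?thesis by simp
next
  case False
  then have lr': "l < r" using lr by simp
  define Y where "Y = a + l*(b-a)"
  define Z where "Z = a + r*(b-a)"
  have Y: "Y > 0" unfolding Y_def using a lr by (simp add: add_pos_nonneg)
  have Z: "Z > 0" unfolding Z_def using a lr by (simp add: add_pos_nonneg)
  define K where "K = (r-l) powr s"
  have K: "K > 0" unfolding K_def using lr' by simp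
  have i1: "(\<lambda>t. (a + t*(b-a)) powr \<rho>) integrable_on {l..r}"
    using a lr s by (intro integrable_continuous_interval continuous_on_powr' continuous_intros)
      (auto simp: add_pos_nonneg less_imp_le)
  have i2: "(\<lambda>t. \<bar>t - r\<bar> powr s) integrable_on {l..r}"
    using s by (intro integrable_continuous_interval cont_abs_pow)
  have i3: "(\<lambda>t. \<bar>t - l\<bar> powr s) integrable_on {l..r}"
    using s by (intro integrable_continuous_interval cont_abs_pow)
  have "integral {l..r} (\<lambda>t. (a + t*(b-a)) powr \<rho>) \<le>
      integral {l..r} (\<lambda>t. (Y powr \<rho> / K) * \<bar>t - r\<bar> powr s + (Z powr \<rho> / K) * \<bar>t - l\<bar> powr s)"
  proof (rule integral_le[OF i1])
    show "(\<lambda>t. (Y powr \<rho> / K) * \<bar>t - r\<bar> powr s + (Z powr \<rho> / K) * \<bar>t - l\<bar> powr s) integrable_on {l..r}"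
      using i2 i3 by (intro integrable_add integrable_on_mult_right)
    fix t assume t: "t \<in> {l..r}"
    define w where "w = (t-l)/(r-l)"
    have w: "0 \<le> w" "w \<le> 1" unfolding w_def using t lr' by auto
    have e: "w*(r-l) = t - l" unfolding w_def using lr' by simp
    have "(1-w)*Y + w*Z = Y + (w*(r-l))*(b-a)" unfolding Y_def Z_def by (simp add: algebra_simps)
    also have "\<dots> = a + t*(b-a)" unfolding e Y_def by (simp add: algebra_simps)
    finally have xt: "a + t*(b-a) = (1-w)*Y + w*Z" by simp
    have w1: "1 - w = \<bar>t - r\<bar> / (r-l)" unfolding w_def using t lr' by (simp add: field_simps)
    have w2: "w = \<bar>t - l\<bar> / (r-l)" unfolding w_def using t lr' by (simp add: field_simps)
    have "(a + t*(b-a)) powr \<rho> \<le> (1-w) powr s * Y powr \<rho> + w powr s * Z powr \<rho>"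
      unfolding xt using Y Z w s by (intro pointwise) auto
    also have "\<dots> = (Y powr \<rho> / K) * \<bar>t - r\<bar> powr s + (Z powr \<rho> / K) * \<bar>t - l\<bar> powr s"
      unfolding K_def using lr' by (simp only: w1) (simp add: w2 powr_divide mult.commute)
    finally show "(a + t*(b-a)) powr \<rho> \<le> \<dots>" .
  qed
  also have "\<dots> = (Y powr \<rho> / K) * integral {l..r} (\<lambda>t. \<bar>t - r\<bar> powr s) + (Z powr \<rho> / K) * integral {l..r} (\<lambda>t. \<bar>t - l\<bar> powr s)"
    by (rule int_lin[OF i2 i3])
  also have "integral {l..r} (\<lambda>t. \<bar>t - r\<bar> powr s) = (r-l) powr (s+1) / (s+1)"
    using int_abs_pow_left[of r r l s] lr s by simp
  also have "integral {l..r} (\<lambda>t. \<bar>t - l\<bar> powr s) = (r-l) powr (s+1) / (s+1)"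
    using int_abs_pow_right[of l l r s] lr s by simp
  also have "(r-l) powr (s+1) = K * (r-l)" unfolding K_def using lr' by (simp add: powr_add)
  also have "Y powr \<rho> / K * (K * (r - l) / (s + 1)) + Z powr \<rho> / K * (K * (r - l) / (s + 1))
      = (r-l) * (Y powr \<rho> + Z powr \<rho>) / (s+1)" using aux_cancel[of K] K by simp
  finally show ?thesis unfolding Y_def Z_def .
qed



lemma piece:
  fixes a b p q s l r c :: real
  assumes a: "0 < a" "a < b" and p: "p > 1" and q: "q > 1" and pq: "1/p + 1/q = 1"
    and s: "0 < s" "s < 1/q" and lr: "0 \<le> l" "l \<le> r"
  shows "\<bar>integral {l..r} (\<lambda>t. (t-c) * ((s+1) * (a+t*(b-a)) powr s))\<bar>
    \<le> integral {l..r} (\<lambda>t. \<bar>t-c\<bar> powr p) powr (1/p) *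
       ((s+1) powr (1-1/q) * ((r-l)*((a+l*(b-a)) powr (s*q) + (a+r*(b-a)) powr (s*q))) powr (1/q))"
proof -
  define h where "h t = (s+1) * (a+t*(b-a)) powr s" for t
  have xpos: "a + t*(b-a) > 0" if "t \<in> {l..r}" for t
    using that a lr by (auto intro: add_pos_nonneg)
  have hc: "continuous_on {l..r} h"
    unfolding h_def using xpos by (intro continuous_intros continuous_on_powr') (auto simp: less_imp_le dest!: xpos)
  have hnn: "h t \<ge> 0" for t unfolding h_def using s by simp
  have ck: "continuous_on {l..r} (\<lambda>t. \<bar>t - c\<bar>)" by (intro continuous_intros)
  have "norm (integral {l..r} (\<lambda>t. (t-c) * h t)) \<le> integral {l..r} (\<lambda>t. \<bar>t - c\<bar> * h t)"
  proof (rule integral_norm_bound_integral)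
    show "(\<lambda>t. (t - c) * h t) integrable_on {l..r}"
      using hc by (intro integrable_continuous_interval continuous_intros)
    show "(\<lambda>t. \<bar>t - c\<bar> * h t) integrable_on {l..r}"
      using hc by (intro integrable_continuous_interval continuous_intros)
    fix t assume "t \<in> {l..r}"
    show "norm ((t - c) * h t) \<le> \<bar>t - c\<bar> * h t" using hnn[of t] by (simp add: abs_mult)
  qed
  then have "\<bar>integral {l..r} (\<lambda>t. (t-c) * h t)\<bar> \<le> integral {l..r} (\<lambda>t. \<bar>t - c\<bar> * h t)" by simp
  also have "\<dots> \<le> integral {l..r} (\<lambda>t. \<bar>t - c\<bar> powr p) powr (1/p) * integral {l..r} (\<lambda>t. h t powr q) powr (1/q)"
    by (rule holder[OF lr(2) ck hc _ p q pq]) (simp add: hnn)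
  also have "integral {l..r} (\<lambda>t. h t powr q) powr (1/q) \<le>
      (s+1) powr (1-1/q) * ((r-l)*((a+l*(b-a)) powr (s*q) + (a+r*(b-a)) powr (s*q))) powr (1/q)"
  proof -
    define W where "W = (r-l)*((a+l*(b-a)) powr (s*q) + (a+r*(b-a)) powr (s*q))"
    have W: "W \<ge> 0" unfolding W_def using lr by simp
    have ix: "(\<lambda>t. (a + t*(b-a)) powr (s*q)) integrable_on {l..r}"
      using xpos by (intro integrable_continuous_interval continuous_on_powr' continuous_intros)
        (auto simp: less_imp_le dest!: xpos)
    have eq: "integral {l..r} (\<lambda>t. h t powr q) = (s+1) powr q * integral {l..r} (\<lambda>t. (a + t*(b-a)) powr (s*q))"
    proof -
      have "integral {l..r} (\<lambda>t. h t powr q) = integral {l..r} (\<lambda>t. (s+1) powr q * (a + t*(b-a)) powr (s*q))"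
        using xpos s by (intro integral_cong) (simp add: h_def powr_mult powr_powr less_imp_le)
      then show ?thesis by simp
    qed
    have sq: "s \<le> s*q" "s*q \<le> 1" using s q pq by (auto simp: field_simps)
    have "integral {l..r} (\<lambda>t. (a + t*(b-a)) powr (s*q)) \<le> W / (s+1)"
      unfolding W_def using int_pow_bound[OF a lr s(1) sq] by simp
    then have "integral {l..r} (\<lambda>t. h t powr q) \<le> (s+1) powr q * (W / (s+1))"
      unfolding eq using s by (intro mult_left_mono) auto
    also have "\<dots> = (s+1) powr (q-1) * W" using s by (simp add: powr_diff)
    finally have le: "integral {l..r} (\<lambda>t. h t powr q) \<le> (s+1) powr (q-1) * W" .
    have nn: "integral {l..r} (\<lambda>t. h t powr q) \<ge> 0"
      using ix eq by (simp add: integral_nonneg)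
    have "integral {l..r} (\<lambda>t. h t powr q) powr (1/q) \<le> ((s+1) powr (q-1) * W) powr (1/q)"
      using le nn q by (intro powr_mono2) auto
    also have "\<dots> = (s+1) powr (1-1/q) * W powr (1/q)"
      using W s q by (simp add: powr_mult powr_powr diff_divide_distrib)
    finally show ?thesis unfolding W_def .
  qed
  then have "integral {l..r} (\<lambda>t. \<bar>t - c\<bar> powr p) powr (1/p) * integral {l..r} (\<lambda>t. h t powr q) powr (1/q)
     \<le> integral {l..r} (\<lambda>t. \<bar>t - c\<bar> powr p) powr (1/p) * ((s+1) powr (1-1/q) * ((r-l)*((a+l*(b-a)) powr (s*q) + (a+r*(b-a)) powr (s*q))) powr (1/q))"
    by (intro mult_left_mono) auto
  finally show ?thesis unfolding h_def .
qed



lemma int_abs_pow_mid: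
  fixes l r c p :: real
  assumes "l \<le> c" "c \<le> r" "p > 0"
  shows "integral {l..r} (\<lambda>t. \<bar>t - c\<bar> powr p) = ((c-l) powr (p+1) + (r-c) powr (p+1))/(p+1)"
proof -
  have i: "(\<lambda>t. \<bar>t - c\<bar> powr p) integrable_on {l..r}"
    using assms by (intro integrable_continuous_interval cont_abs_pow)
  have "integral {l..r} (\<lambda>t. \<bar>t - c\<bar> powr p) = integral {l..c} (\<lambda>t. \<bar>t - c\<bar> powr p) + integral {c..r} (\<lambda>t. \<bar>t - c\<bar> powr p)"
    using Henstock_Kurzweil_Integration.integral_combine[OF assms(1,2) i] by simp
  also have "\<dots> = ((c-l) powr (p+1) + (r-c) powr (p+1))/(p+1)"
    using int_abs_pow_left[of c c l p] int_abs_pow_right[of c c r p] assms by (simp add: add_divide_distrib)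
  finally show ?thesis .
qed

lemma ftc_piece:
  fixes a b s l r c :: real
  assumes a: "0 < a" "a < b" and s: "0 < s" and lr: "0 \<le> l" "l \<le> r"
  shows "integral {l..r} (\<lambda>t. (t-c) * ((s+1) * (a+t*(b-a)) powr s)) =
     (\<lambda>t. ((t-c) * (a+t*(b-a)) powr (s+1) - (a+t*(b-a)) powr (s+2) / ((s+2)*(b-a))) / (b-a)) r
   - (\<lambda>t. ((t-c) * (a+t*(b-a)) powr (s+1) - (a+t*(b-a)) powr (s+2) / ((s+2)*(b-a))) / (b-a)) l"
proof (rule integral_unique, rule ftc[OF lr(2)])
  have xpos: "a + t*(b-a) > 0" if "t \<in> {l..r}" for t
    using that a lr by (auto intro: add_pos_nonneg)
  show "continuous_on {l..r} (\<lambda>t. ((t-c) * (a+t*(b-a)) powr (s+1) - (a+t*(b-a)) powr (s+2) / ((s+2)*(b-a))) / (b-a))"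
    using xpos s a by (intro continuous_intros continuous_on_powr') (auto simp: less_imp_le dest!: xpos)
  fix t assume t: "t \<in> {l<..<r}"
  then have x: "a + t*(b-a) > 0" using xpos by auto
  have bs: "b - a \<noteq> 0" "s + 2 \<noteq> 0" using a s by auto
  have e1: "(a + t*(b-a)) powr (s+1) = (a + t*(b-a)) powr s * (a + t*(b-a))"
    using x by (simp add: powr_add)
  define X where "X = (a+t*(b-a)) powr s"
  define D where "D = b - a"
  have d1: "((\<lambda>t. (a+t*(b-a)) powr (s+1)) has_real_derivative ((s+1) * X * D)) (at t)"
    unfolding X_def D_def using x by (auto intro!: derivative_eq_intros)
  have d2: "((\<lambda>t. (a+t*(b-a)) powr (s+2)) has_real_derivative ((s+2) * (a+t*(b-a)) powr (s+1) * D)) (at t)"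
    unfolding D_def using x by (auto intro!: derivative_eq_intros simp: add.commute)
  have dtc: "((\<lambda>t. t - c) has_real_derivative 1) (at t)" by (auto intro!: derivative_eq_intros)
  have dd: "((\<lambda>t. ((t-c) * (a+t*(b-a)) powr (s+1) - (a+t*(b-a)) powr (s+2) / ((s+2)*(b-a))) / (b-a))
      has_real_derivative ((1 * (a+t*(b-a)) powr (s+1) + (s+1) * X * D * (t-c)) - ((s+2) * (a+t*(b-a)) powr (s+1) * D) / ((s+2)*(b-a))) / (b-a)) (at t)"
    by (intro DERIV_cdivide DERIV_diff DERIV_mult dtc d1 d2)
  have eq: "((1 * (a+t*(b-a)) powr (s+1) + (s+1) * X * D * (t-c)) - ((s+2) * (a+t*(b-a)) powr (s+1) * D) / ((s+2)*(b-a))) / (b-a)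
     = (t-c) * ((s+1) * X)"
  proof -
    have "((s+2) * (a+t*(b-a)) powr (s+1) * D) / ((s+2)*(b-a)) = (a+t*(b-a)) powr (s+1)"
      unfolding D_def using bs by simp
    then show ?thesis unfolding D_def using bs by (simp add: field_simps)
  qed
  show "((\<lambda>t. ((t-c) * (a+t*(b-a)) powr (s+1) - (a+t*(b-a)) powr (s+2) / ((s+2)*(b-a))) / (b-a))
      has_real_derivative (t-c) * ((s+1) * (a+t*(b-a)) powr s)) (at t)"
    using DERIV_cong[OF dd eq] unfolding X_def .
qed



lemma alg_ident0:
  fixes D K a1 b1 A1 a2 b2 A2 \<alpha> lam :: real
  assumes "D \<noteq> 0"
  shows "lam * wam \<alpha> a1 b1 + (1-lam) * A1 - (b2 - a2)/K =
   D * (((1-\<alpha>-\<alpha>*lam) * A1 - A2 / K) / D - ((0-\<alpha>*lam) * a1 - a2 / K) / D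
          + (((1-(1-lam*(1-\<alpha>))) * b1 - b2 / K) / D - ((1-\<alpha>-(1-lam*(1-\<alpha>))) * A1 - A2 / K) / D))"
proof -
  have eq: "D * (X / D - Y / D + (Z / D - W / D)) = X - Y + (Z - W)" for X Y Z W
    using assms by (simp add: field_simps)
  show ?thesis unfolding wam_def by (subst eq) (simp add: algebra_simps diff_divide_distrib)
qed

lemma alg_ident:
  fixes a1 b1 A1 a2 b2 A2 \<alpha> lam :: real
  assumes "b - a \<noteq> 0"
  shows "lam * wam \<alpha> a1 b1 + (1-lam) * A1 - (b2 - a2)/((s+2)*(b-a)) =
   (b-a) * (((1-\<alpha>-\<alpha>*lam) * A1 - A2 / ((s+2)*(b-a))) / (b-a) - ((0-\<alpha>*lam) * a1 - a2 / ((s+2)*(b-a))) / (b-a)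
          + (((1-(1-lam*(1-\<alpha>))) * b1 - b2 / ((s+2)*(b-a))) / (b-a) - ((1-\<alpha>-(1-lam*(1-\<alpha>))) * A1 - A2 / ((s+2)*(b-a))) / (b-a)))"
  by (rule alg_ident0[OF assms])

lemma core:
  fixes a b p q s \<alpha> lam \<epsilon>1 \<epsilon>2 :: real
  assumes a: "0 < a" "a < b" and p: "p > 1" and q: "q > 1" and pq: "1 / p + 1 / q = 1"
    and s: "0 < s" "s < 1 / q"
    and al: "0 \<le> \<alpha>" "\<alpha> \<le> 1" and lam: "0 \<le> lam" "lam \<le> 1"
    and I1: "integral {0..1-\<alpha>} (\<lambda>t. \<bar>t - \<alpha>*lam\<bar> powr p) = \<epsilon>1/(p+1)"
    and I2: "integral {1-\<alpha>..1} (\<lambda>t. \<bar>t - (1-lam*(1-\<alpha>))\<bar> powr p) = \<epsilon>2/(p+1)"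
  shows "\<bar>lam * wam \<alpha> (a powr (s + 1)) (b powr (s + 1)) + (1 - lam) * wam \<alpha> a b powr (s + 1)
                 - plog_mean (s + 1) a b powr (s + 1)\<bar>
     \<le> (b - a) * (1 / (p + 1)) powr (1 / p) * (s + 1) powr (1 - 1 / q) *
        (\<epsilon>1 powr (1/p) * Cs a b s \<alpha> q powr (1/q) + \<epsilon>2 powr (1/p) * Ds a b s \<alpha> q powr (1/q))"
proof -
  define A where "A = wam \<alpha> a b"
  define c1 where "c1 = \<alpha>*lam"
  define c2 where "c2 = 1-lam*(1-\<alpha>)"
  define G where "G c t = ((t-c) * (a+t*(b-a)) powr (s+1) - (a+t*(b-a)) powr (s+2) / ((s+2)*(b-a))) / (b-a)" for c t
  define P1 where "P1 = integral {0..1-\<alpha>} (\<lambda>t. (t-c1) * ((s+1) * (a+t*(b-a)) powr s))"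
  define P2 where "P2 = integral {1-\<alpha>..1} (\<lambda>t. (t-c2) * ((s+1) * (a+t*(b-a)) powr s))"
  have xb: "a + (1-\<alpha>)*(b-a) = A" unfolding A_def wam_def by (simp add: algebra_simps)
  have Apos: "A > 0" using xb a al by (metis add_pos_nonneg diff_ge_0_iff_ge less_imp_le mult_nonneg_nonneg)
  have P1e: "P1 = G (\<alpha>*lam) (1-\<alpha>) - G (\<alpha>*lam) 0" unfolding P1_def G_def c1_def
    using ftc_piece[OF a s(1), of 0 "1-\<alpha>" "\<alpha>*lam"] al by simp
  have P2e: "P2 = G (1-lam*(1-\<alpha>)) 1 - G (1-lam*(1-\<alpha>)) (1-\<alpha>)" unfolding P2_def G_def c2_def
    using ftc_piece[OF a s(1), of "1-\<alpha>" 1 "1-lam*(1-\<alpha>)"] al by simp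
  have Q: "(b powr (s+2) - a powr (s+2)) / ((s+2)*(b-a)) > 0"
    using a s by (auto intro!: divide_pos_pos powr_less_mono2)
  have plog: "plog_mean (s + 1) a b powr (s + 1) = (b powr (s+2) - a powr (s+2)) / ((s+2)*(b-a))"
  proof -
    have "s + 1 + 1 = s + 2" by simp
    moreover have "b powr (s+2) > a powr (s+2)" using a s by (intro powr_less_mono2) auto
    ultimately show ?thesis unfolding plog_mean_def using Q s a
      by (simp add: powr_powr add.commute[of 1 s] add.assoc)
  qed
  have g0: "G c 0 = ((0-c) * a powr (s+1) - a powr (s+2) / ((s+2)*(b-a))) / (b-a)" for c
    by (simp add: G_def)
  have g1: "G c 1 = ((1-c) * b powr (s+1) - b powr (s+2) / ((s+2)*(b-a))) / (b-a)" for c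
    by (simp add: G_def)
  have gb: "G c (1-\<alpha>) = ((1-\<alpha>-c) * A powr (s+1) - A powr (s+2) / ((s+2)*(b-a))) / (b-a)" for c
    by (simp add: G_def xb)
  have ident: "lam * wam \<alpha> (a powr (s + 1)) (b powr (s + 1)) + (1 - lam) * wam \<alpha> a b powr (s + 1)
                 - plog_mean (s + 1) a b powr (s + 1) = (b - a) * (P1 + P2)"
    unfolding P1e P2e plog g0 g1 gb A_def[symmetric]
    by (rule alg_ident) (use a in auto)
  define R where "R = (1 / (p + 1)) powr (1 / p)"
  define S where "S = (s + 1) powr (1 - 1 / q)"
  have W1: "(1-\<alpha>-0)*((a+0*(b-a)) powr (s*q) + (a+(1-\<alpha>)*(b-a)) powr (s*q)) = Cs a b s \<alpha> q"
    unfolding xb Cs_def A_def by simp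
  have W2: "(1-(1-\<alpha>))*((a+(1-\<alpha>)*(b-a)) powr (s*q) + (a+1*(b-a)) powr (s*q)) = Ds a b s \<alpha> q"
    unfolding xb Ds_def A_def by simp
  have ipos: "integral {l..r} (\<lambda>t. \<bar>t - c\<bar> powr p) \<ge> 0" if "l \<le> r" for l r c
    using p by (intro integral_nonneg integrable_continuous_interval cont_abs_pow) auto
  have e1: "\<epsilon>1 \<ge> 0" using ipos[of 0 "1-\<alpha>" "\<alpha>*lam"] I1 al p by (simp add: zero_le_divide_iff)
  have e2: "\<epsilon>2 \<ge> 0" using ipos[of "1-\<alpha>" 1 "1-lam*(1-\<alpha>)"] I2 al p by (simp add: zero_le_divide_iff)
  have r1: "(\<epsilon>1/(p+1)) powr (1/p) = R * \<epsilon>1 powr (1/p)"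
    unfolding R_def using e1 p by (simp add: powr_divide powr_mult[symmetric] divide_inverse mult.commute)
  have r2: "(\<epsilon>2/(p+1)) powr (1/p) = R * \<epsilon>2 powr (1/p)"
    unfolding R_def using e2 p by (simp add: powr_divide powr_mult[symmetric] divide_inverse mult.commute)
  have B1: "\<bar>P1\<bar> \<le> R * \<epsilon>1 powr (1/p) * (S * Cs a b s \<alpha> q powr (1/q))"
    using piece[OF a p q pq s, of 0 "1-\<alpha>" c1] al unfolding P1_def W1 c1_def I1 r1 S_def by simp
  have B2: "\<bar>P2\<bar> \<le> R * \<epsilon>2 powr (1/p) * (S * Ds a b s \<alpha> q powr (1/q))"
    using piece[OF a p q pq s, of "1-\<alpha>" 1 c2] al unfolding P2_def W2 c2_def I2 r2 S_def by simp
  have "\<bar>(b - a) * (P1 + P2)\<bar> = (b-a) * \<bar>P1 + P2\<bar>" using a by (simp add: abs_mult)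
  also have "\<dots> \<le> (b-a) * (\<bar>P1\<bar> + \<bar>P2\<bar>)" using a by (intro mult_left_mono abs_triangle_ineq) auto
  also have "\<dots> \<le> (b-a) * (R * \<epsilon>1 powr (1/p) * (S * Cs a b s \<alpha> q powr (1/q)) + R * \<epsilon>2 powr (1/p) * (S * Ds a b s \<alpha> q powr (1/q)))"
    using a B1 B2 by (intro mult_left_mono add_mono) auto
  also have "\<dots> = (b - a) * R * S * (\<epsilon>1 powr (1/p) * Cs a b s \<alpha> q powr (1/q) + \<epsilon>2 powr (1/p) * Ds a b s \<alpha> q powr (1/q))"
    by (simp add: algebra_simps)
  finally show ?thesis unfolding ident R_def S_def .
qed



theorem mainTheorem8:
  fixes a b p q s \<alpha> lam :: real
  assumes "0 < a" "a < b" "p > 1" "q > 1" "1 / p + 1 / q = 1"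
    and "0 < s" "s < 1 / q"
    and "0 \<le> \<alpha>" "\<alpha> \<le> 1" "0 \<le> lam" "lam \<le> 1"
  defines "E \<equiv> \<bar>lam * wam \<alpha> (a powr (s + 1)) (b powr (s + 1))
                 + (1 - lam) * wam \<alpha> a b powr (s + 1)
                 - plog_mean (s + 1) a b powr (s + 1)\<bar>"
    and "M \<equiv> (b - a) * (1 / (p + 1)) powr (1 / p) * (s + 1) powr (1 - 1 / q)"
  shows "(\<alpha> * lam \<le> 1 - \<alpha> \<and> 1 - \<alpha> \<le> 1 - lam * (1 - \<alpha>) \<longrightarrow>
           E \<le> M * (eps1 \<alpha> lam p powr (1 / p) * Cs a b s \<alpha> q powr (1 / q)
                   + eps1 (1 - \<alpha>) lam p powr (1 / p) * Ds a b s \<alpha> q powr (1 / q)))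
       \<and> (\<alpha> * lam \<le> 1 - lam * (1 - \<alpha>) \<and> 1 - lam * (1 - \<alpha>) \<le> 1 - \<alpha> \<longrightarrow>
           E \<le> M * (eps1 \<alpha> lam p powr (1 / p) * Cs a b s \<alpha> q powr (1 / q)
                   + eps2 (1 - \<alpha>) lam p powr (1 / p) * Ds a b s \<alpha> q powr (1 / q)))
       \<and> (1 - \<alpha> \<le> \<alpha> * lam \<and> \<alpha> * lam \<le> 1 - lam * (1 - \<alpha>) \<longrightarrow>
           E \<le> M * (eps2 \<alpha> lam p powr (1 / p) * Cs a b s \<alpha> q powr (1 / q)
                   + eps1 (1 - \<alpha>) lam p powr (1 / p) * Ds a b s \<alpha> q powr (1 / q)))"
proof -
  note C = core[OF assms(1-11)]
  have p0: "p > 0" using assms by simp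
  have c1: "0 \<le> \<alpha> * lam" using assms by simp
  have c2: "1 - lam * (1 - \<alpha>) \<le> 1" using assms by simp
  have J1m: "integral {0..1-\<alpha>} (\<lambda>t. \<bar>t - \<alpha>*lam\<bar> powr p) = eps1 \<alpha> lam p / (p+1)"
    if "\<alpha> * lam \<le> 1 - \<alpha>"
    using int_abs_pow_mid[OF c1 that p0] by (simp add: eps1_def)
  have J1l: "integral {0..1-\<alpha>} (\<lambda>t. \<bar>t - \<alpha>*lam\<bar> powr p) = eps2 \<alpha> lam p / (p+1)"
    if "1 - \<alpha> \<le> \<alpha> * lam"
  proof -
    have eq: "\<alpha> * lam - (1 - \<alpha>) = \<alpha> * lam - 1 + \<alpha>" by simp
    show ?thesis using int_abs_pow_left[OF that _ p0, of 0] assms unfolding eps2_def eq[symmetric] by simp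
  qed
  have J2m: "integral {1-\<alpha>..1} (\<lambda>t. \<bar>t - (1-lam*(1-\<alpha>))\<bar> powr p) = eps1 (1-\<alpha>) lam p / (p+1)"
    if "1 - \<alpha> \<le> 1 - lam * (1 - \<alpha>)"
  proof -
    have eq1: "1 - lam * (1 - \<alpha>) - (1 - \<alpha>) = 1 - (1 - \<alpha>) - (1 - \<alpha>) * lam" by (simp add: algebra_simps)
    have eq2: "1 - (1 - lam * (1 - \<alpha>)) = (1 - \<alpha>) * lam" by simp
    show ?thesis using int_abs_pow_mid[OF that c2 p0]
      unfolding eps1_def eq1[symmetric] eq2[symmetric] by (simp add: add.commute)
  qed
  have J2r: "integral {1-\<alpha>..1} (\<lambda>t. \<bar>t - (1-lam*(1-\<alpha>))\<bar> powr p) = eps2 (1-\<alpha>) lam p / (p+1)"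
    if "1 - lam * (1 - \<alpha>) \<le> 1 - \<alpha>"
  proof -
    have eq1: "1 - \<alpha> - (1 - lam * (1 - \<alpha>)) = (1 - \<alpha>) * lam - 1 + (1 - \<alpha>)" by (simp add: algebra_simps)
    have eq2: "1 - (1 - lam * (1 - \<alpha>)) = (1 - \<alpha>) * lam" by simp
    show ?thesis using int_abs_pow_right[OF that _ p0, of 1] assms
      unfolding eps2_def eq1[symmetric] eq2[symmetric] by simp
  qed
  show ?thesis
    unfolding E_def M_def
  proof (intro conjI impI)
    assume h: "\<alpha> * lam \<le> 1 - \<alpha> \<and> 1 - \<alpha> \<le> 1 - lam * (1 - \<alpha>)"
    then show "\<bar>lam * wam \<alpha> (a powr (s + 1)) (b powr (s + 1)) + (1 - lam) * wam \<alpha> a b powr (s + 1) - plog_mean (s + 1) a b powr (s + 1)\<bar>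
    \<le> (b - a) * (1 / (p + 1)) powr (1 / p) * (s + 1) powr (1 - 1 / q) *
       (eps1 \<alpha> lam p powr (1 / p) * Cs a b s \<alpha> q powr (1 / q) + eps1 (1 - \<alpha>) lam p powr (1 / p) * Ds a b s \<alpha> q powr (1 / q))"
      using C[OF J1m J2m] by blast
  next
    assume h: "\<alpha> * lam \<le> 1 - lam * (1 - \<alpha>) \<and> 1 - lam * (1 - \<alpha>) \<le> 1 - \<alpha>"
    then show "\<bar>lam * wam \<alpha> (a powr (s + 1)) (b powr (s + 1)) + (1 - lam) * wam \<alpha> a b powr (s + 1) - plog_mean (s + 1) a b powr (s + 1)\<bar>
    \<le> (b - a) * (1 / (p + 1)) powr (1 / p) * (s + 1) powr (1 - 1 / q) *
       (eps1 \<alpha> lam p powr (1 / p) * Cs a b s \<alpha> q powr (1 / q) + eps2 (1 - \<alpha>) lam p powr (1 / p) * Ds a b s \<alpha> q powr (1 / q))"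
      using C[OF J1m J2r] by fastforce
  next
    assume h: "1 - \<alpha> \<le> \<alpha> * lam \<and> \<alpha> * lam \<le> 1 - lam * (1 - \<alpha>)"
    then show "\<bar>lam * wam \<alpha> (a powr (s + 1)) (b powr (s + 1)) + (1 - lam) * wam \<alpha> a b powr (s + 1) - plog_mean (s + 1) a b powr (s + 1)\<bar>
    \<le> (b - a) * (1 / (p + 1)) powr (1 / p) * (s + 1) powr (1 - 1 / q) *
       (eps2 \<alpha> lam p powr (1 / p) * Cs a b s \<alpha> q powr (1 / q) + eps1 (1 - \<alpha>) lam p powr (1 / p) * Ds a b s \<alpha> q powr (1 / q))"
      using C[OF J1l J2m] by fastforce
  qed
qed


end
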